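(* Let $c$ (with $X,Y$) satisfy the standing assumptions below, and suppose $c$ satisfies Loeper's condition. If there exist $r>0$ and $M\ge1$ such that $$F(v_t)-F(v_0)\le Mt\,(F(v_1)-F(v_0))_+\quad\text{for all }t\in[0,1]$$ holds for all $x_0,x_1\in X$, all $v_0\in Y^*_{x_0}$ and all $v_1\in B^+_r(v_0)\cap Y^*_{x_0}$, then $c$ is QQconv.
   Context: Standing assumptions: $X,Y\subset\mathbb{R}^n$ compact; $c:X\times Y\to\mathbb{R}$ measurable, differentiable, with mixed Hessians $D^2_{xy}c$, $D^2_{yx}c$ existing and $(D^2_{xy}c)^T=D^2_{yx}c$; $-D_xc(x,\cdot)$ injective on $Y$ for each $x$ and $-D_yc(\cdot,y)$ injective on $X$ for each $y$; $D^2_{xy}c(x,y)$ invertible everywhere; $D^2_{xy}c$ Lipschitz; $Y^*_x:=-D_xc(x,Y)$ convex for each $x\in X$ and $X^*_y:=-D_yc(X,y)$ convex for each $y\in Y$. The map $\exp^c_x:Y^*_x\to Y$ is the inverse of $-D_xc(x,\cdot)$. For $x_0,x_1\in X$, define $F:Y^*_{x_0}\to\mathbb{R}$ by $F(v)=-c(x_1,\exp^c_{x_0}(v))+c(x_0,\exp^c_{x_0}(v))$ (it depends on $x_0,x_1$), and $v_t=(1-t)v_0+tv_1$. $B^+_r(v_0)=\{v\in B_r(v_0):\langle v-v_0,\nabla F(v_0)\rangle\ge0\}$, where $B_r(v_0)$ is the open Euclidean ball. Loeper's condition: $F(v_t)\le\max\{F(v_0),F(v_1)\}$ for all $x_0,x_1\in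 X$, $v_0,v_1\in Y^*_{x_0}$, $t\in[0,1]$. QQconv: there is $M'\ge1$ with $F(v_t)-F(v_0)\le M't\,(F(v_1)-F(v_0))_+$ for all $x_0,x_1\in X$, $v_0,v_1\in Y^*_{x_0}$, $t\in[0,1]$; here $a_+=\max\{a,0\}$. *)

theory Defs
  imports "HOL-Analysis.Analysis"
begin

type_synonym 'n vec = "real ^ 'n"

definition standing_assumptions ::
  "'n::finite vec set \<Rightarrow> 'n vec set \<Rightarrow> ('n vec \<Rightarrow> 'n vec \<Rightarrow> real)
   \<Rightarrow> ('n vec \<Rightarrow> 'n vec \<Rightarrow> 'n vec) \<Rightarrow> ('n vec \<Rightarrow> 'n vec \<Rightarrow> 'n vec)
   \<Rightarrow> ('n vec \<Rightarrow> 'n vec \<Rightarrow> real^'n^'n) \<Rightarrow> ('n vec \<Rightarrow> 'n vec \<Rightarrow> real^'n^'n) \<Rightarrow> bool"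
  where "standing_assumptions X Y c Dx Dy Dxy Dyx \<longleftrightarrow>
    compact X \<and> compact Y \<and>
    (\<lambda>(x, y). c x y) \<in> borel_measurable (restrict_space borel (X \<times> Y)) \<and>
    (\<forall>x\<in>X. \<forall>y\<in>Y. (\<lambda>(x', y'). c x' y') differentiable (at (x, y))) \<and>
    (\<forall>x\<in>X. \<forall>y\<in>Y. ((\<lambda>x'. c x' y) has_derivative (\<lambda>h. Dx x y \<bullet> h)) (at x)) \<and>
    (\<forall>x\<in>X. \<forall>y\<in>Y. ((\<lambda>y'. c x y') has_derivative (\<lambda>k. Dy x y \<bullet> k)) (at y)) \<and>
    (\<forall>x\<in>X. \<forall>y\<in>Y. ((\<lambda>y'. Dx x y') has_derivative (\<lambda>k. Dxy x y *v k)) (at y)) \<and>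
    (\<forall>x\<in>X. \<forall>y\<in>Y. ((\<lambda>x'. Dy x' y) has_derivative (\<lambda>h. Dyx x y *v h)) (at x)) \<and>
    (\<forall>x\<in>X. \<forall>y\<in>Y. transpose (Dxy x y) = Dyx x y) \<and>
    (\<forall>x\<in>X. inj_on (\<lambda>y. - Dx x y) Y) \<and>
    (\<forall>y\<in>Y. inj_on (\<lambda>x. - Dy x y) X) \<and>
    (\<forall>x\<in>X. \<forall>y\<in>Y. invertible (Dxy x y)) \<and>
    (\<exists>L. L-lipschitz_on (X \<times> Y) (\<lambda>(x, y). Dxy x y)) \<and>
    (\<forall>x\<in>X. convex ((\<lambda>y. - Dx x y) ` Y)) \<and>
    (\<forall>y\<in>Y. convex ((\<lambda>x. - Dy x y) ` X))"

definition Ystar :: "'n::finite vec set \<Rightarrow> ('n vec \<Rightarrow> 'n vec \<Rightarrow> 'n vec) \<Rightarrow> 'n vec \<Rightarrow> 'n vec set"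
  where "Ystar Y Dx x = (\<lambda>y. - Dx x y) ` Y"

definition expc :: "'n::finite vec set \<Rightarrow> ('n vec \<Rightarrow> 'n vec \<Rightarrow> 'n vec) \<Rightarrow> 'n vec \<Rightarrow> 'n vec \<Rightarrow> 'n vec"
  where "expc Y Dx x v = inv_into Y (\<lambda>y. - Dx x y) v"

definition Ffun :: "'n::finite vec set \<Rightarrow> ('n vec \<Rightarrow> 'n vec \<Rightarrow> real) \<Rightarrow> ('n vec \<Rightarrow> 'n vec \<Rightarrow> 'n vec)
    \<Rightarrow> 'n vec \<Rightarrow> 'n vec \<Rightarrow> 'n vec \<Rightarrow> real"
  where "Ffun Y c Dx x0 x1 v = - c x1 (expc Y Dx x0 v) + c x0 (expc Y Dx x0 v)"

definition gradF :: "'n::finite vec set \<Rightarrow> ('n vec \<Rightarrow> 'n vec \<Rightarrow> real) \<Rightarrow> ('n vec \<Rightarrow> 'n vec \<Rightarrow> 'n vec)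
    \<Rightarrow> 'n vec \<Rightarrow> 'n vec \<Rightarrow> 'n vec \<Rightarrow> 'n vec"
  where "gradF Y c Dx x0 x1 v =
    (SOME g. (Ffun Y c Dx x0 x1 has_derivative (\<lambda>h. g \<bullet> h)) (at v within Ystar Y Dx x0))"

definition Bplus :: "'n::finite vec set \<Rightarrow> ('n vec \<Rightarrow> 'n vec \<Rightarrow> real) \<Rightarrow> ('n vec \<Rightarrow> 'n vec \<Rightarrow> 'n vec)
    \<Rightarrow> 'n vec \<Rightarrow> 'n vec \<Rightarrow> real \<Rightarrow> 'n vec \<Rightarrow> 'n vec set"
  where "Bplus Y c Dx x0 x1 r v0 =
    {v \<in> ball v0 r. (v - v0) \<bullet> gradF Y c Dx x0 x1 v0 \<ge> 0}"

definition loeper :: "'n::finite vec set \<Rightarrow> 'n vec set \<Rightarrow> ('n vec \<Rightarrow> 'n vec \<Rightarrow> real)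
    \<Rightarrow> ('n vec \<Rightarrow> 'n vec \<Rightarrow> 'n vec) \<Rightarrow> bool"
  where "loeper X Y c Dx \<longleftrightarrow>
    (\<forall>x0\<in>X. \<forall>x1\<in>X. \<forall>v0\<in>Ystar Y Dx x0. \<forall>v1\<in>Ystar Y Dx x0. \<forall>t\<in>{0..1::real}.
       Ffun Y c Dx x0 x1 ((1 - t) *\<^sub>R v0 + t *\<^sub>R v1)
         \<le> max (Ffun Y c Dx x0 x1 v0) (Ffun Y c Dx x0 x1 v1))"

definition QQconv :: "'n::finite vec set \<Rightarrow> 'n vec set \<Rightarrow> ('n vec \<Rightarrow> 'n vec \<Rightarrow> real)
    \<Rightarrow> ('n vec \<Rightarrow> 'n vec \<Rightarrow> 'n vec) \<Rightarrow> bool"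
  where "QQconv X Y c Dx \<longleftrightarrow>
    (\<exists>M'\<ge>1. \<forall>x0\<in>X. \<forall>x1\<in>X. \<forall>v0\<in>Ystar Y Dx x0. \<forall>v1\<in>Ystar Y Dx x0. \<forall>t\<in>{0..1::real}.
       Ffun Y c Dx x0 x1 ((1 - t) *\<^sub>R v0 + t *\<^sub>R v1) - Ffun Y c Dx x0 x1 v0
         \<le> M' * t * max (Ffun Y c Dx x0 x1 v1 - Ffun Y c Dx x0 x1 v0) 0)"

end

theory Submission
  imports Defs
begin


lemma has_derivative_inverse_within:
  fixes f :: "'a::real_normed_vector \<Rightarrow> 'b::real_normed_vector"
  assumes derf: "(f has_derivative f') (at (g y))"
    and ling': "bounded_linear g'"
    and gf: "g' \<circ> f' = id"
    and contg: "continuous (at y within T) g"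
    and yT: "y \<in> T"
    and fg: "\<And>z. z \<in> T \<Longrightarrow> f (g z) = z"
  shows "(g has_derivative g') (at y within T)"
proof -
  interpret f': bounded_linear f'
    using assms unfolding has_derivative_def by auto
  interpret g': bounded_linear g'
    using assms by auto
  obtain C where C: "0 < C" "\<And>x. norm (g' x) \<le> norm x * C"
    using bounded_linear.pos_bounded[OF assms(2)] by blast
  have lem1: "\<forall>e>0. \<exists>d>0. \<forall>z\<in>T.
    norm (z - y) < d \<longrightarrow> norm (g z - g y - g'(z - y)) \<le> e * norm (g z - g y)"
  proof (intro allI impI)
    fix e :: real
    assume "e > 0"
    with C(1) have *: "e / C > 0" by auto
    obtain d0 where  "0 < d0" and d0:
        "\<And>u. norm (u - g y) < d0 \<Longrightarrow> norm (f u - f (g y) - f' (u - g y)) \<le> e / C * norm (u - g y)"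
      using derf * unfolding has_derivative_at_alt by blast
    obtain d1 where "0 < d1" and d1: "\<And>x. x \<in> T \<Longrightarrow> dist x y < d1 \<Longrightarrow> dist (g x) (g y) < d0"
      using contg \<open>0 < d0\<close> unfolding continuous_within_eps_delta by blast
    show "\<exists>d>0. \<forall>z\<in>T. norm (z - y) < d \<longrightarrow> norm (g z - g y - g' (z - y)) \<le> e * norm (g z - g y)"
    proof (intro exI ballI impI conjI)
      fix z
      assume "z \<in> T" and as: "norm (z - y) < d1"
      have "norm (g z - g y - g' (z - y)) \<le> norm (g' (f (g z) - y - f' (g z - g y)))"
        unfolding g'.diff f'.diff
        unfolding gf[unfolded o_def id_def, THEN fun_cong] fg[OF \<open>z\<in>T\<close>]
        by (simp add: norm_minus_commute)
      also have "\<dots> \<le> norm (f (g z) - y - f' (g z - g y)) * C"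
        by (rule C(2))
      also have "\<dots> \<le> (e / C) * norm (g z - g y) * C"
      proof -
        have "norm (g z - g y) < d0"
          using d1[OF \<open>z\<in>T\<close>] as by (simp add: dist_norm)
        then show ?thesis
          by (metis C(1) \<open>y \<in> T\<close> d0 fg mult_le_cancel_right_pos)
      qed
      also have "\<dots> \<le> e * norm (g z - g y)"
        using C by (auto simp add: field_simps)
      finally show "norm (g z - g y - g' (z - y)) \<le> e * norm (g z - g y)"
        by simp
    qed (use \<open>0 < d1\<close> in auto)
  qed
  have *: "(0::real) < 1 / 2"
    by auto
  obtain d where "0 < d" and d:
      "\<And>z. z \<in> T \<Longrightarrow> norm (z - y) < d \<Longrightarrow> norm (g z - g y - g' (z - y)) \<le> 1/2 * norm (g z - g y)"
    using lem1 * by blast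
  define B where "B = C * 2"
  have "B > 0"
    unfolding B_def using C by auto
  have lem2: "norm (g z - g y) \<le> B * norm (z - y)" if z: "z \<in> T" "norm(z - y) < d" for z
  proof -
    have "norm (g z - g y) \<le> norm(g' (z - y)) + norm ((g z - g y) - g'(z - y))"
      by (rule norm_triangle_sub)
    also have "\<dots> \<le> norm (g' (z - y)) + 1 / 2 * norm (g z - g y)"
      by (rule add_left_mono) (use d z in auto)
    also have "\<dots> \<le> norm (z - y) * C + 1 / 2 * norm (g z - g y)"
      by (rule add_right_mono) (use C in auto)
    finally show "norm (g z - g y) \<le> B * norm (z - y)"
      unfolding B_def
      by (auto simp add: field_simps)
  qed
  show ?thesis
    unfolding has_derivative_within_alt
  proof (intro conjI assms allI impI)
    fix e :: real
    assume "e > 0"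
    then have *: "e / B > 0" by (metis \<open>B > 0\<close> divide_pos_pos)
    obtain d' where "0 < d'" and d':
        "\<And>z. z \<in> T \<Longrightarrow> norm (z - y) < d' \<Longrightarrow> norm (g z - g y - g' (z - y)) \<le> e / B * norm (g z - g y)"
      using lem1 * by blast
    obtain k where k: "0 < k" "k < d" "k < d'"
      using field_lbound_gt_zero[OF \<open>0 < d\<close> \<open>0 < d'\<close>] by blast
    show "\<exists>d>0. \<forall>ya\<in>T. norm (ya - y) < d \<longrightarrow> norm (g ya - g y - g' (ya - y)) \<le> e * norm (ya - y)"
    proof (intro exI ballI impI conjI)
      fix z
      assume zT: "z \<in> T" and as: "norm (z - y) < k"
      then have "norm (g z - g y - g' (z - y)) \<le> e / B * norm(g z - g y)"
        using d' k by auto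
      also have "\<dots> \<le> e * norm (z - y)"
        unfolding times_divide_eq_left pos_divide_le_eq[OF \<open>B>0\<close>]
        using lem2[OF zT, of] k as \<open>e > 0\<close>
        by (auto simp add: field_simps)
      finally show "norm (g z - g y - g' (z - y)) \<le> e * norm (z - y)"
        by simp
    qed (use k in auto)
  qed
qed



lemma matrix_inv_props:
  fixes A :: "real^'n::finite^'n"
  assumes "invertible A"
  shows "A ** matrix_inv A = mat 1" "matrix_inv A ** A = mat 1"
proof -
  have "\<exists>A'. A ** A' = mat 1 \<and> A' ** A = mat 1" using assms unfolding invertible_def by blast
  hence "A ** matrix_inv A = mat 1 \<and> matrix_inv A ** A = mat 1"
    unfolding matrix_inv_def by (rule someI_ex)
  thus "A ** matrix_inv A = mat 1" "matrix_inv A ** A = mat 1" by auto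
qed

lemma mv_neg: "(A::real^'n::finite^'m::finite) *v (- x) = - (A *v x)"
  by (metis matrix_vector_mult_diff_distrib matrix_vector_mult_0_right diff_0)

lemma exp_facts:
  assumes SA: "standing_assumptions X Y c Dx Dy Dxy Dyx" and x: "x \<in> X"
  shows "v \<in> Ystar Y Dx x \<Longrightarrow> expc Y Dx x v \<in> Y"
    and "v \<in> Ystar Y Dx x \<Longrightarrow> - Dx x (expc Y Dx x v) = v"
    and "y \<in> Y \<Longrightarrow> expc Y Dx x (- Dx x y) = y"
proof -
  have inj: "inj_on (\<lambda>y. - Dx x y) Y" using SA x unfolding standing_assumptions_def by blast
  show "v \<in> Ystar Y Dx x \<Longrightarrow> expc Y Dx x v \<in> Y"
    unfolding expc_def Ystar_def by (rule inv_into_into)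
  show "v \<in> Ystar Y Dx x \<Longrightarrow> - Dx x (expc Y Dx x v) = v"
    unfolding expc_def Ystar_def using f_inv_into_f[of v "\<lambda>y. - Dx x y" Y] by simp
  show "y \<in> Y \<Longrightarrow> expc Y Dx x (- Dx x y) = y"
    unfolding expc_def using inv_into_f_f[OF inj] by simp
qed

lemma exp_cont:
  assumes SA: "standing_assumptions X Y c Dx Dy Dxy Dyx" and x: "x \<in> X"
  shows "continuous_on (Ystar Y Dx x) (expc Y Dx x)"
proof -
  have "\<forall>y\<in>Y. ((\<lambda>y'. Dx x y') has_derivative (\<lambda>k. Dxy x y *v k)) (at y)"
    using SA x unfolding standing_assumptions_def by blast
  hence "\<forall>y\<in>Y. isCont (\<lambda>y'. - Dx x y') y"
    using has_derivative_continuous continuous_minus by blast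
  hence cont: "continuous_on Y (\<lambda>y'. - Dx x y')"
    by (simp add: continuous_at_imp_continuous_on)
  have "compact Y" using SA unfolding standing_assumptions_def by blast
  show ?thesis unfolding Ystar_def
    by (rule continuous_on_inv[OF cont \<open>compact Y\<close>]) (use exp_facts(3)[OF SA x] in auto)
qed

lemma exp_deriv:
  assumes SA: "standing_assumptions X Y c Dx Dy Dxy Dyx" and x: "x \<in> X"
    and v: "v \<in> Ystar Y Dx x"
  shows "(expc Y Dx x has_derivative (\<lambda>w. - (matrix_inv (Dxy x (expc Y Dx x v)) *v w)))
           (at v within Ystar Y Dx x)"
proof -
  define y where "y = expc Y Dx x v"
  have y: "y \<in> Y" "- Dx x y = v" using exp_facts[OF SA x] v unfolding y_def by auto
  have d: "((\<lambda>y'. Dx x y') has_derivative (\<lambda>k. Dxy x y *v k)) (at y)"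
    using SA x y unfolding standing_assumptions_def by blast
  have inv: "invertible (Dxy x y)" using SA x y unfolding standing_assumptions_def by blast
  show ?thesis unfolding y_def[symmetric]
  proof (rule has_derivative_inverse_within[where f="\<lambda>y. - Dx x y" and f'="\<lambda>k. - (Dxy x y *v k)"])
    show "((\<lambda>y. - Dx x y) has_derivative (\<lambda>k. - (Dxy x y *v k))) (at (expc Y Dx x v))"
      using has_derivative_minus[OF d] unfolding y_def by simp
    show "bounded_linear (\<lambda>w. - (matrix_inv (Dxy x y) *v w))"
      by (intro bounded_linear_minus matrix_vector_mul_bounded_linear)
    show "(\<lambda>w. - (matrix_inv (Dxy x y) *v w)) \<circ> (\<lambda>k. - (Dxy x y *v k)) = id"
      by (rule ext) (simp add: matrix_vector_mul_assoc matrix_inv_props[OF inv] mv_neg)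
    show "continuous (at v within Ystar Y Dx x) (expc Y Dx x)"
      using exp_cont[OF SA x] v continuous_on_eq_continuous_within by blast
    show "v \<in> Ystar Y Dx x" by fact
    show "\<And>z. z \<in> Ystar Y Dx x \<Longrightarrow> - Dx x (expc Y Dx x z) = z" using exp_facts(2)[OF SA x] by blast
  qed
qed

lemma F_deriv:
  assumes SA: "standing_assumptions X Y c Dx Dy Dxy Dyx" and x0: "x0 \<in> X" and x1: "x1 \<in> X"
    and v: "v \<in> Ystar Y Dx x0"
  shows "\<exists>g. (Ffun Y c Dx x0 x1 has_derivative (\<lambda>h. g \<bullet> h)) (at v within Ystar Y Dx x0)"
proof -
  define y where "y = expc Y Dx x0 v"
  define Ai where "Ai = matrix_inv (Dxy x0 y)"
  have y: "y \<in> Y" using exp_facts[OF SA x0] v unfolding y_def by auto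
  have E: "(expc Y Dx x0 has_derivative (\<lambda>w. - (Ai *v w))) (at v within Ystar Y Dx x0)"
    using exp_deriv[OF SA x0 v] unfolding Ai_def y_def .
  have d1: "((\<lambda>y'. c x1 y') has_derivative (\<lambda>k. Dy x1 y \<bullet> k)) (at (expc Y Dx x0 v))"
    using SA x1 y unfolding standing_assumptions_def y_def by blast
  have d0: "((\<lambda>y'. c x0 y') has_derivative (\<lambda>k. Dy x0 y \<bullet> k)) (at (expc Y Dx x0 v))"
    using SA x0 y unfolding standing_assumptions_def y_def by blast
  have D: "((\<lambda>v. - c x1 (expc Y Dx x0 v) + c x0 (expc Y Dx x0 v)) has_derivative
      (\<lambda>h. - (Dy x1 y \<bullet> (- (Ai *v h))) + Dy x0 y \<bullet> (- (Ai *v h)))) (at v within Ystar Y Dx x0)"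
    by (intro has_derivative_add has_derivative_minus has_derivative_compose[OF E d1]
          has_derivative_compose[OF E d0])
  have eq: "(\<lambda>h. - (Dy x1 y \<bullet> (- (Ai *v h))) + Dy x0 y \<bullet> (- (Ai *v h)))
      = (\<lambda>h. ((Dy x1 y - Dy x0 y) v* Ai) \<bullet> h)"
    by (rule ext) (simp add: dot_lmul_matrix inner_diff_left)
  have "Ffun Y c Dx x0 x1 = (\<lambda>v. - c x1 (expc Y Dx x0 v) + c x0 (expc Y Dx x0 v))"
    by (rule ext) (simp add: Ffun_def)
  thus ?thesis using D unfolding eq by auto
qed

lemma gradF_prop:
  assumes SA: "standing_assumptions X Y c Dx Dy Dxy Dyx" and x0: "x0 \<in> X" and x1: "x1 \<in> X"
    and v: "v \<in> Ystar Y Dx x0"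
  shows "(Ffun Y c Dx x0 x1 has_derivative (\<lambda>h. gradF Y c Dx x0 x1 v \<bullet> h)) (at v within Ystar Y Dx x0)"
  unfolding gradF_def by (rule someI_ex[OF F_deriv[OF SA x0 x1 v]])

lemma F_cont:
  assumes SA: "standing_assumptions X Y c Dx Dy Dxy Dyx" and x0: "x0 \<in> X" and x1: "x1 \<in> X"
  shows "continuous_on (Ystar Y Dx x0) (Ffun Y c Dx x0 x1)"
  using gradF_prop[OF SA x0 x1] has_derivative_continuous continuous_on_eq_continuous_within by blast

lemma direction:
  fixes F :: "'a::real_inner \<Rightarrow> real"
  assumes D: "(F has_derivative (\<lambda>h. g \<bullet> h)) (at p within S)"
    and dpos: "\<delta> > 0" and path: "\<And>s. 0 \<le> s \<Longrightarrow> s \<le> \<delta> \<Longrightarrow> p + s *\<^sub>R u \<in> S"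
    and incr: "\<And>s. 0 < s \<Longrightarrow> s \<le> \<delta> \<Longrightarrow> F p \<le> F (p + s *\<^sub>R u)"
  shows "0 \<le> u \<bullet> g"
proof -
  have P: "((\<lambda>s. p + s *\<^sub>R u) has_derivative (\<lambda>s. s *\<^sub>R u)) (at 0 within {0..\<delta>})"
    by (auto intro!: derivative_eq_intros)
  have D': "(F has_derivative (\<lambda>h. g \<bullet> h)) (at ((\<lambda>s. p + s *\<^sub>R u) 0) within ((\<lambda>s. p + s *\<^sub>R u) ` {0..\<delta>}))"
  proof -
    have "(\<lambda>s. p + s *\<^sub>R u) ` {0..\<delta>} \<subseteq> S" using path by auto
    from has_derivative_subset[OF D this] show ?thesis by simp
  qed
  have C: "((\<lambda>s. F (p + s *\<^sub>R u)) has_derivative (\<lambda>s. g \<bullet> (s *\<^sub>R u))) (at 0 within {0..\<delta>})"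
    using diff_chain_within[OF P D'] by (simp add: o_def)
  have "((\<lambda>s. F (p + s *\<^sub>R u)) has_field_derivative (u \<bullet> g)) (at 0 within {0..\<delta>})"
  proof -
    have "(\<lambda>s. g \<bullet> (s *\<^sub>R u)) = (*) (u \<bullet> g)" by (rule ext) (simp add: inner_commute)
    thus ?thesis unfolding has_field_derivative_def using C by simp
  qed
  hence T: "((\<lambda>s. (F (p + s *\<^sub>R u) - F p) / (s - 0)) \<longlongrightarrow> u \<bullet> g) (at 0 within {0..\<delta>})"
    unfolding has_field_derivative_iff by simp
  have ev: "eventually (\<lambda>s. 0 \<le> (F (p + s *\<^sub>R u) - F p) / (s - 0)) (at 0 within {0..\<delta>})"
    unfolding eventually_at_filter using incr by (auto intro!: always_eventually)
  have nb: "at 0 within {0..\<delta>} \<noteq> bot"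
  proof -
    have "{0..\<delta>} - {0} = {0<..\<delta>}" by auto
    thus ?thesis using dpos by (simp add: at_within_eq_bot_iff)
  qed
  show ?thesis by (rule tendsto_lowerbound[OF T ev nb])
qed



lemma mv_bound:
  fixes A :: "real^'n::finite^'n"
  assumes "norm A \<le> N"
  shows "norm (A *v k) \<le> (real CARD('n) * real CARD('n) * N) * norm k"
proof -
  have "\<bar>A $ i $ j\<bar> \<le> N" for i j
    using component_le_norm_cart[of "A $ i" j] Finite_Cartesian_Product.norm_nth_le[of A i] assms by linarith
  hence "onorm ((*v) A) \<le> real CARD('n) * real CARD('n) * N" by (rule onorm_le_matrix_component)
  moreover have "norm (A *v k) \<le> onorm ((*v) A) * norm k"
    by (rule onorm[OF matrix_vector_mul_bounded_linear])
  ultimately show ?thesis by (meson mult_right_mono norm_ge_zero order_trans)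
qed

lemma diam_bound:
  fixes X Y :: "(real ^ 'n::finite) set"
  assumes SA: "standing_assumptions X Y c Dx Dy Dxy Dyx"
  shows "\<exists>D\<ge>0. \<forall>x\<in>X. \<forall>v\<in>Ystar Y Dx x. \<forall>w\<in>Ystar Y Dx x. norm (v - w) \<le> D"
proof (cases "X = {} \<or> Y = {}")
  case True
  thus ?thesis unfolding Ystar_def by (intro exI[of _ 0]) auto
next
  case False
  then obtain x0 where x0: "x0 \<in> X" by auto
  have Yne: "Y \<noteq> {}" using False by auto
  have cX: "compact X" and cY: "compact Y" using SA unfolding standing_assumptions_def by auto
  obtain L where "L-lipschitz_on (X \<times> Y) (\<lambda>(x, y). Dxy x y)"
    using SA unfolding standing_assumptions_def by blast
  hence contD: "continuous_on (X \<times> Y) (\<lambda>(x, y). Dxy x y)" by (rule lipschitz_on_continuous_on)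
  have "compact ((\<lambda>(x, y). Dxy x y) ` (X \<times> Y))"
    by (rule compact_continuous_image[OF contD compact_Times[OF cX cY]])
  then obtain N where N: "\<And>p. p \<in> (\<lambda>(x, y). Dxy x y) ` (X \<times> Y) \<Longrightarrow> norm p \<le> N"
    using compact_imp_bounded bounded_iff by metis
  define Bn where "Bn = real CARD('n) * real CARD('n) * N"
  have Bn: "norm (Dxy x y *v k) \<le> Bn * norm k" if "x \<in> X" "y \<in> Y" for x y k
    unfolding Bn_def by (rule mv_bound) (use N that in auto)
  define K where "K = Y \<times> sphere (0::real^'n) 1"
  have cK: "compact K" unfolding K_def by (intro compact_Times cY compact_sphere)
  have Kne: "K \<noteq> {}" unfolding K_def using Yne by simp
  have cD0: "continuous_on K (\<lambda>p. Dxy x0 (fst p))"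
  proof -
    have "continuous_on K (\<lambda>p. (x0, fst p))" by (intro continuous_intros)
    moreover have "(\<lambda>p. (x0, fst p)) ` K \<subseteq> X \<times> Y" unfolding K_def using x0 by auto
    ultimately have "continuous_on K ((\<lambda>(x, y). Dxy x y) \<circ> (\<lambda>p. (x0, fst p)))"
      by (intro continuous_on_compose continuous_on_subset[OF contD])
    thus ?thesis by (simp add: o_def)
  qed
  have "continuous_on K (\<lambda>p. norm (Dxy x0 (fst p) *v snd p))"
    using cD0 unfolding matrix_vector_mult_def by (intro continuous_intros)
  then obtain p0 where p0: "p0 \<in> K" and p0min: "\<And>p. p \<in> K \<Longrightarrow> norm (Dxy x0 (fst p0) *v snd p0) \<le> norm (Dxy x0 (fst p) *v snd p)"
    using continuous_attains_inf[OF cK Kne] by blast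
  define m where "m = norm (Dxy x0 (fst p0) *v snd p0)"
  have "m > 0"
  proof -
    have "invertible (Dxy x0 (fst p0))" using SA x0 p0 unfolding standing_assumptions_def K_def by auto
    hence "inj ((*v) (Dxy x0 (fst p0)))" by (rule inj_matrix_vector_mult)
    moreover have "snd p0 \<noteq> 0" using p0 unfolding K_def by auto
    ultimately have "Dxy x0 (fst p0) *v snd p0 \<noteq> Dxy x0 (fst p0) *v 0" by (metis injD)
    thus ?thesis unfolding m_def by simp
  qed
  have mlow: "m * norm u \<le> norm (Dxy x0 y *v u)" if y: "y \<in> Y" for y u
  proof (cases "u = 0")
    case True thus ?thesis by simp
  next
    case False
    define e where "e = (1 / norm u) *\<^sub>R u"
    have "(y, e) \<in> K" unfolding K_def e_def using y False by auto
    hence "m \<le> norm (Dxy x0 y *v e)" using p0min unfolding m_def by fastforce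
    also have "Dxy x0 y *v e = (1 / norm u) *\<^sub>R (Dxy x0 y *v u)"
      unfolding e_def by (simp add: matrix_vector_mult_scaleR)
    finally have "m \<le> norm (Dxy x0 y *v u) / norm u" by simp
    thus ?thesis using False by (simp add: le_divide_eq mult.commute)
  qed
  define S0 where "S0 = Ystar Y Dx x0"
  have cvx: "convex S0" using SA x0 unfolding standing_assumptions_def S0_def Ystar_def by blast
  have "compact S0"
  proof -
    have "\<forall>y\<in>Y. ((\<lambda>y'. Dx x0 y') has_derivative (\<lambda>k. Dxy x0 y *v k)) (at y)"
      using SA x0 unfolding standing_assumptions_def by blast
    hence "\<forall>y\<in>Y. isCont (\<lambda>y'. - Dx x0 y') y"
      using has_derivative_continuous continuous_minus by blast
    hence "continuous_on Y (\<lambda>y'. - Dx x0 y')"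
      by (simp add: continuous_at_imp_continuous_on)
    thus ?thesis unfolding S0_def Ystar_def by (rule compact_continuous_image[OF _ cY])
  qed
  then obtain D0 where D0: "\<And>v. v \<in> S0 \<Longrightarrow> norm v \<le> D0"
    using compact_imp_bounded bounded_iff by metis
  define D where "D = Bn / m * (2 * D0)"
  have main: "norm (v - w) \<le> D" if x: "x \<in> X" and v: "v \<in> Ystar Y Dx x" and w: "w \<in> Ystar Y Dx x" for x v w
  proof -
    define \<phi> where "\<phi> = (\<lambda>z. - Dx x (expc Y Dx x0 z))"
    have der: "(\<phi> has_derivative (\<lambda>h. - (Dxy x (expc Y Dx x0 z) *v (- (matrix_inv (Dxy x0 (expc Y Dx x0 z)) *v h)))))
        (at z within S0)" if z: "z \<in> S0" for z
    proof -
      have yz: "expc Y Dx x0 z \<in> Y" using exp_facts(1)[OF SA x0] z unfolding S0_def by auto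
      have "((\<lambda>y'. Dx x y') has_derivative (\<lambda>k. Dxy x (expc Y Dx x0 z) *v k)) (at (expc Y Dx x0 z))"
        using SA x yz unfolding standing_assumptions_def by blast
      from has_derivative_minus[OF has_derivative_compose[OF exp_deriv[OF SA x0 z[unfolded S0_def]] this]]
      show ?thesis unfolding \<phi>_def S0_def .
    qed
    have ob: "onorm (\<lambda>h. - (Dxy x (expc Y Dx x0 z) *v (- (matrix_inv (Dxy x0 (expc Y Dx x0 z)) *v h)))) \<le> Bn / m"
      if z: "z \<in> S0" for z
    proof (rule onorm_le)
      fix h
      define y where "y = expc Y Dx x0 z"
      have yz: "y \<in> Y" using exp_facts(1)[OF SA x0] z unfolding S0_def y_def by auto
      have inv: "invertible (Dxy x0 y)" using SA x0 yz unfolding standing_assumptions_def by blast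
      define q where "q = matrix_inv (Dxy x0 y) *v h"
      have "Dxy x0 y *v q = h" unfolding q_def
        by (simp add: matrix_vector_mul_assoc matrix_inv_props[OF inv])
      hence mq: "m * norm q \<le> norm h" using mlow[OF yz, of q] by simp
      have "norm (- (Dxy x y *v (- q))) = norm (Dxy x y *v q)" by (simp add: mv_neg)
      also have "\<dots> \<le> Bn * norm q" by (rule Bn[OF x yz])
      also have "\<dots> \<le> Bn * (norm h / m)"
      proof -
        have "Bn \<ge> 0" using Bn[OF x yz, of "axis undefined 1"] by (simp add: order_trans[OF norm_ge_zero])
        moreover have "norm q \<le> norm h / m" using mq \<open>m > 0\<close> by (simp add: le_divide_eq mult.commute)
        ultimately show ?thesis by (intro mult_left_mono)
      qed
      finally show "norm (- (Dxy x (expc Y Dx x0 z) *v (- (matrix_inv (Dxy x0 (expc Y Dx x0 z)) *v h)))) \<le> Bn / m * norm h"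
        unfolding y_def[symmetric] q_def[symmetric] by simp
    qed
    have lip: "norm (\<phi> a - \<phi> b) \<le> Bn / m * norm (a - b)" if "a \<in> S0" "b \<in> S0" for a b
      by (rule differentiable_bound[OF cvx der ob that])
    obtain y1 where y1: "y1 \<in> Y" "v = - Dx x y1" using v unfolding Ystar_def by auto
    obtain y2 where y2: "y2 \<in> Y" "w = - Dx x y2" using w unfolding Ystar_def by auto
    define a where "a = - Dx x0 y1"
    define b where "b = - Dx x0 y2"
    have ab: "a \<in> S0" "b \<in> S0" unfolding a_def b_def S0_def Ystar_def using y1 y2 by auto
    have "\<phi> a = v" "\<phi> b = w" unfolding \<phi>_def a_def b_def using exp_facts(3)[OF SA x0] y1 y2 by auto
    hence "norm (v - w) \<le> Bn / m * norm (a - b)" using lip[OF ab] by simp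
    also have "\<dots> \<le> Bn / m * (2 * D0)"
    proof -
      have "norm (a - b) \<le> 2 * D0" using D0[OF ab(1)] D0[OF ab(2)] norm_triangle_ineq4[of a b] by linarith
      moreover have "Bn / m \<ge> 0"
        using Bn[OF x0 y1(1), of "axis undefined 1"] \<open>m > 0\<close> by (simp add: order_trans[OF norm_ge_zero])
      ultimately show ?thesis by (intro mult_left_mono)
    qed
    finally show ?thesis unfolding D_def .
  qed
  have "D \<ge> 0"
  proof -
    obtain y where "y \<in> Y" using Yne by auto
    hence yy: "- Dx x0 y \<in> Ystar Y Dx x0" unfolding Ystar_def by auto
    show ?thesis using main[OF x0 yy yy] by simp
  qed
  thus ?thesis using main by blast
qed



lemma one_dim:
  fixes G :: "real \<Rightarrow> real" and M \<delta> t :: real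
  assumes cont: "continuous_on {0..1} G"
    and qc: "\<And>a b s. 0 \<le> a \<Longrightarrow> a \<le> s \<Longrightarrow> s \<le> b \<Longrightarrow> b \<le> 1 \<Longrightarrow> G s \<le> max (G a) (G b)"
    and loc: "\<And>a b \<tau>. 0 \<le> a \<Longrightarrow> a \<le> b \<Longrightarrow> b \<le> 1 \<Longrightarrow> (\<forall>s. a < s \<and> s \<le> 1 \<longrightarrow> G a < G s)
       \<Longrightarrow> b - a \<le> \<delta> \<Longrightarrow> 0 \<le> \<tau> \<Longrightarrow> \<tau> \<le> 1
       \<Longrightarrow> G (a + \<tau> * (b - a)) - G a \<le> M * \<tau> * max (G b - G a) 0"
    and dpos: "\<delta> > 0" and M: "M \<ge> 1" and t: "0 \<le> t" "t \<le> 1"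
  shows "G t - G 0 \<le> M * (1 + 1 / \<delta>) * t * max (G 1 - G 0) 0"
proof (cases "G 1 \<le> G 0")
  case True
  have "G t \<le> G 0" using qc[of 0 t 1] t True by auto
  moreover have "0 \<le> M * (1 + 1 / \<delta>) * t * max (G 1 - G 0) 0"
    using M dpos t by (intro mult_nonneg_nonneg) auto
  ultimately show ?thesis by linarith
next
  case False
  define S where "S = {s \<in> {0..1}. G s = G 0}"
  have clS: "closed S" unfolding S_def
    by (rule continuous_closed_preimage_constant[OF cont]) auto
  have "0 \<in> S" unfolding S_def by auto
  have bdd: "bdd_above S" unfolding S_def by (auto intro: bdd_aboveI[of _ 1])
  define a where "a = Sup S"
  have aS: "a \<in> S" unfolding a_def using closed_contains_Sup[OF _ bdd clS] \<open>0 \<in> S\<close> by blast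
  have a01: "0 \<le> a" "a \<le> 1" and Ga: "G a = G 0" using aS unfolding S_def by auto
  have a1: "a < 1" using a01 Ga False by (cases "a = 1") auto
  have above: "G a < G s" if s: "a < s" "s \<le> 1" for s
  proof (rule ccontr)
    assume "\<not> G a < G s"
    hence "G s \<le> G 0" using Ga by simp
    moreover have "G 0 \<le> G 1" using False by simp
    moreover have "continuous_on {s..1} G" using a01 s by (intro continuous_on_subset[OF cont]) auto
    ultimately obtain z where z: "s \<le> z" "z \<le> 1" "G z = G 0"
      using IVT'[of G s "G 0" 1] s by auto
    hence "z \<in> S" using s a01 unfolding S_def by auto
    hence "z \<le> a" unfolding a_def using bdd by (rule cSup_upper)
    thus False using z s by simp
  qed
  have nn: "0 \<le> M * (1 + 1 / \<delta>) * t * max (G 1 - G 0) 0"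
    using M dpos t by (intro mult_nonneg_nonneg) auto
  show ?thesis
  proof (cases "t \<le> a")
    case True
    have "G t \<le> max (G 0) (G a)" using qc[of 0 t a] True t a01 by auto
    thus ?thesis using Ga nn by auto
  next
    case ta: False
    define b where "b = min 1 (a + \<delta>)"
    have b: "a < b" "b \<le> 1" "b - a \<le> \<delta>" using a1 dpos unfolding b_def by auto
    have Gb: "G b \<le> G 1" using qc[of 0 b 1] b a01 False by auto
    have Gt1: "G t \<le> G 1" using qc[of 0 t 1] t False by auto
    show ?thesis
    proof (cases "t \<le> b")
      case True
      define \<tau> where "\<tau> = (t - a) / (b - a)"
      have tau: "0 \<le> \<tau>" "\<tau> \<le> 1" using ta True b unfolding \<tau>_def by auto
      have eq: "a + \<tau> * (b - a) = t" using b unfolding \<tau>_def by auto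
      have "G t - G 0 \<le> M * \<tau> * max (G b - G a) 0"
        using loc[OF a01(1) _ b(2) _ b(3) tau] above b eq Ga by auto
      also have "\<dots> \<le> M * \<tau> * (G 1 - G 0)"
        using Gb Ga False M tau by (intro mult_left_mono) auto
      also have "\<dots> \<le> M * ((1 + 1 / \<delta>) * t) * (G 1 - G 0)"
      proof -
        have "\<tau> \<le> (1 + 1 / \<delta>) * t"
        proof (cases "b = 1")
          case True
          have "\<tau> \<le> t" unfolding \<tau>_def using True a1 a01 t
            by (simp add: divide_le_eq algebra_simps mult_left_le_one_le mult_right_le_one_le)
          moreover have "t \<le> (1 + 1 / \<delta>) * t" using dpos t by (simp add: algebra_simps)
          ultimately show ?thesis by linarith
        next
          case False
          hence "b = a + \<delta>" unfolding b_def by auto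
          hence "\<tau> = (t - a) / \<delta>" unfolding \<tau>_def by simp
          also have "\<dots> \<le> t / \<delta>" using a01 dpos by (simp add: divide_right_mono)
          also have "\<dots> \<le> (1 + 1 / \<delta>) * t" using t by (simp add: algebra_simps)
          finally show ?thesis .
        qed
        thus ?thesis using M False by (intro mult_right_mono mult_left_mono) auto
      qed
      finally show ?thesis using False by (simp add: mult.assoc)
    next
      case False
      hence "b = a + \<delta>" using t unfolding b_def by (auto simp: min_def split: if_splits)
      hence "\<delta> \<le> t" using False a01 by linarith
      hence "1 \<le> t / \<delta>" using dpos by (simp add: le_divide_eq)
      also have "t / \<delta> \<le> (1 + 1 / \<delta>) * t" using t by (simp add: algebra_simps)
      also have "\<dots> \<le> M * ((1 + 1 / \<delta>) * t)"
      proof -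
        have nn2: "0 \<le> (1 + 1 / \<delta>) * t" using t dpos by simp
        show ?thesis using mult_right_mono[OF M nn2] by simp
      qed
      finally have "1 \<le> M * (1 + 1 / \<delta>) * t" by (simp only: mult.assoc)
      hence h: "1 * (G 1 - G 0) \<le> M * (1 + 1 / \<delta>) * t * (G 1 - G 0)"
        using \<open>\<not> G 1 \<le> G 0\<close> by (intro mult_right_mono) auto
      have mx: "max (G 1 - G 0) 0 = G 1 - G 0" using \<open>\<not> G 1 \<le> G 0\<close> by simp
      have "G t - G 0 \<le> 1 * (G 1 - G 0)" using Gt1 by simp
      thus ?thesis unfolding mx using h by (rule order_trans)
    qed
  qed
qed


lemma seg_comb:
  fixes v0 v1 :: "'a::real_vector"
  shows "(1 - l) *\<^sub>R ((1 - a) *\<^sub>R v0 + a *\<^sub>R v1) + l *\<^sub>R ((1 - b) *\<^sub>R v0 + b *\<^sub>R v1)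
    = (1 - (a + l * (b - a))) *\<^sub>R v0 + (a + l * (b - a)) *\<^sub>R v1"
  by (simp add: algebra_simps)

lemma seg_shift:
  fixes v0 v1 :: "'a::real_vector"
  shows "((1 - a) *\<^sub>R v0 + a *\<^sub>R v1) + s *\<^sub>R (v1 - v0) = (1 - (a + s)) *\<^sub>R v0 + (a + s) *\<^sub>R v1"
  by (simp add: algebra_simps)

lemma seg_diff:
  fixes v0 v1 :: "'a::real_vector"
  shows "((1 - b) *\<^sub>R v0 + b *\<^sub>R v1) - ((1 - a) *\<^sub>R v0 + a *\<^sub>R v1) = (b - a) *\<^sub>R (v1 - v0)"
  by (simp add: algebra_simps)

theorem lemma3p8:
  fixes X Y :: "(real ^ 'n::finite) set"
    and c :: "real ^ 'n \<Rightarrow> real ^ 'n \<Rightarrow> real"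
    and Dx Dy :: "real ^ 'n \<Rightarrow> real ^ 'n \<Rightarrow> real ^ 'n"
    and Dxy Dyx :: "real ^ 'n \<Rightarrow> real ^ 'n \<Rightarrow> real ^ 'n ^ 'n"
  assumes "standing_assumptions X Y c Dx Dy Dxy Dyx"
    and "loeper X Y c Dx"
    and "\<exists>r>0. \<exists>M\<ge>1. \<forall>x0\<in>X. \<forall>x1\<in>X. \<forall>v0\<in>Ystar Y Dx x0.
           \<forall>v1\<in>Bplus Y c Dx x0 x1 r v0 \<inter> Ystar Y Dx x0. \<forall>t\<in>{0..1::real}.
             Ffun Y c Dx x0 x1 ((1 - t) *\<^sub>R v0 + t *\<^sub>R v1) - Ffun Y c Dx x0 x1 v0
               \<le> M * t * max (Ffun Y c Dx x0 x1 v1 - Ffun Y c Dx x0 x1 v0) 0"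
  shows "QQconv X Y c Dx"
proof -
  note SA = assms(1)
  obtain r M where r: "r > 0" and M: "M \<ge> 1" and H: "\<forall>x0\<in>X. \<forall>x1\<in>X. \<forall>v0\<in>Ystar Y Dx x0.
           \<forall>v1\<in>Bplus Y c Dx x0 x1 r v0 \<inter> Ystar Y Dx x0. \<forall>t\<in>{0..1::real}.
             Ffun Y c Dx x0 x1 ((1 - t) *\<^sub>R v0 + t *\<^sub>R v1) - Ffun Y c Dx x0 x1 v0
               \<le> M * t * max (Ffun Y c Dx x0 x1 v1 - Ffun Y c Dx x0 x1 v0) 0"
    using assms(3) by blast
  obtain D where D0: "D \<ge> 0" and D: "\<And>x v w. x \<in> X \<Longrightarrow> v \<in> Ystar Y Dx x \<Longrightarrow> w \<in> Ystar Y Dx x \<Longrightarrow> norm (v - w) \<le> D"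
    using diam_bound[OF SA] by blast
  define M' where "M' = M * (2 + 2 * D / r)"
  have M'1: "M' \<ge> 1"
  proof -
    have "1 \<le> 2 + 2 * D / r" using D0 r by simp
    hence "1 * 1 \<le> M * (2 + 2 * D / r)" using M by (intro mult_mono) auto
    thus ?thesis unfolding M'_def by simp
  qed
  show ?thesis unfolding QQconv_def
  proof (intro exI[of _ M'] conjI M'1 ballI)
    fix x0 x1 v0 v1 t
    assume x0: "x0 \<in> X" and x1: "x1 \<in> X" and v0: "v0 \<in> Ystar Y Dx x0" and v1: "v1 \<in> Ystar Y Dx x0"
      and t: "t \<in> {0..1::real}"
    define S where "S = Ystar Y Dx x0"
    define F where "F = Ffun Y c Dx x0 x1"
    define vt where "vt = (\<lambda>s::real. (1 - s) *\<^sub>R v0 + s *\<^sub>R v1)"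
    define G where "G = (\<lambda>s. F (vt s))"
    define L where "L = norm (v1 - v0)"
    define \<delta> where "\<delta> = (if L = 0 then 1 else (r / 2) / L)"
    have cvx: "convex S" using SA x0 unfolding standing_assumptions_def S_def Ystar_def by blast
    have vtS: "vt s \<in> S" if "0 \<le> s" "s \<le> 1" for s
      unfolding vt_def using convexD[OF cvx v0[folded S_def] v1[folded S_def], of "1 - s" s] that by auto
    have LD: "L \<le> D" unfolding L_def using D[OF x0 v1 v0] .
    have dpos: "\<delta> > 0" unfolding \<delta>_def using r L_def by auto
    have dL: "\<delta> * L < r" unfolding \<delta>_def using r by auto
    have cont: "continuous_on {0..1} G"
    proof -
      have "continuous_on {0..1::real} vt" unfolding vt_def by (intro continuous_intros)
      moreover have "vt ` {0..1} \<subseteq> S" using vtS by auto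
      ultimately show ?thesis unfolding G_def
        by (rule continuous_on_compose2[OF F_cont[OF SA x0 x1, folded S_def F_def]])
    qed
    have qc: "G s \<le> max (G a) (G b)" if "0 \<le> a" "a \<le> s" "s \<le> b" "b \<le> 1" for a b s
    proof (cases "a = b")
      case True thus ?thesis using that by auto
    next
      case False
      define l where "l = (s - a) / (b - a)"
      have l: "0 \<le> l" "l \<le> 1" using that False unfolding l_def by auto
      have ls: "a + l * (b - a) = s" using False unfolding l_def by auto
      have "F ((1 - l) *\<^sub>R vt a + l *\<^sub>R vt b) \<le> max (F (vt a)) (F (vt b))"
        using assms(2) x0 x1 vtS[of a] vtS[of b] l that unfolding loeper_def F_def S_def by auto
      thus ?thesis unfolding G_def using ls by (simp add: vt_def seg_comb)
    qed
    have loc: "G (a + \<tau> * (b - a)) - G a \<le> M * \<tau> * max (G b - G a) 0"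
      if ab: "0 \<le> a" "a \<le> b" "b \<le> 1" and incr: "\<forall>s. a < s \<and> s \<le> 1 \<longrightarrow> G a < G s"
        and bd: "b - a \<le> \<delta>" and tau: "0 \<le> \<tau>" "\<tau> \<le> 1" for a b \<tau>
    proof -
      have va: "vt a \<in> S" and vb: "vt b \<in> S" using vtS ab by auto
      have gF: "0 \<le> (vt b - vt a) \<bullet> gradF Y c Dx x0 x1 (vt a)"
      proof (cases "a = 1")
        case True thus ?thesis using ab by auto
      next
        case False
        have "0 \<le> (v1 - v0) \<bullet> gradF Y c Dx x0 x1 (vt a)"
        proof (rule direction[OF gradF_prop[OF SA x0 x1 va[unfolded S_def]]])
          show "0 < 1 - a" using False ab by auto
          show "vt a + s *\<^sub>R (v1 - v0) \<in> Ystar Y Dx x0" if "0 \<le> s" "s \<le> 1 - a" for s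
            using vtS[of "a + s"] that ab unfolding vt_def S_def by (simp add: seg_shift)
          show "Ffun Y c Dx x0 x1 (vt a) \<le> Ffun Y c Dx x0 x1 (vt a + s *\<^sub>R (v1 - v0))"
            if "0 < s" "s \<le> 1 - a" for s
            using incr[rule_format, of "a + s"] that unfolding G_def F_def vt_def
            by (simp add: seg_shift)
        qed
        thus ?thesis unfolding vt_def seg_diff using ab by simp
      qed
      have "norm (vt b - vt a) = (b - a) * L" unfolding vt_def seg_diff L_def using ab by simp
      also have "\<dots> \<le> \<delta> * L" using bd L_def by (intro mult_right_mono) auto
      also have "\<dots> < r" by (rule dL)
      finally have "vt b \<in> ball (vt a) r" by (simp add: dist_norm norm_minus_commute)
      hence "vt b \<in> Bplus Y c Dx x0 x1 r (vt a) \<inter> Ystar Y Dx x0"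
        using gF vb unfolding Bplus_def S_def by auto
      hence "F ((1 - \<tau>) *\<^sub>R vt a + \<tau> *\<^sub>R vt b) - F (vt a) \<le> M * \<tau> * max (F (vt b) - F (vt a)) 0"
        using H x0 x1 va tau unfolding S_def F_def by auto
      thus ?thesis unfolding G_def by (simp add: vt_def seg_comb)
    qed
    have main: "G t - G 0 \<le> M * (1 + 1 / \<delta>) * t * max (G 1 - G 0) 0"
      by (rule one_dim[OF cont qc loc dpos M]) (use t in auto)
    have "1 / \<delta> \<le> 1 + 2 * D / r"
    proof (cases "L = 0")
      case True thus ?thesis unfolding \<delta>_def using D0 r by simp
    next
      case False
      hence "1 / \<delta> = 2 * L / r" unfolding \<delta>_def by simp
      also have "\<dots> \<le> 2 * D / r" using LD r by (simp add: divide_right_mono)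
      finally show ?thesis by simp
    qed
    hence "M * (1 + 1 / \<delta>) \<le> M'" unfolding M'_def using M by (intro mult_left_mono) auto
    hence "M * (1 + 1 / \<delta>) * (t * max (G 1 - G 0) 0) \<le> M' * (t * max (G 1 - G 0) 0)"
      using t by (intro mult_right_mono) auto
    hence "G t - G 0 \<le> M' * t * max (G 1 - G 0) 0" using main by (simp add: mult.assoc)
    thus "Ffun Y c Dx x0 x1 ((1 - t) *\<^sub>R v0 + t *\<^sub>R v1) - Ffun Y c Dx x0 x1 v0
         \<le> M' * t * max (Ffun Y c Dx x0 x1 v1 - Ffun Y c Dx x0 x1 v0) 0"
      unfolding G_def F_def vt_def by simp
  qed
qed

end
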